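(* Suppose that $$\lim_{n\to\infty}\frac{\sqrt n\,\psi(n)}{S(n)}=0,$$ where $\psi(n)=S(n-1)-S(n)=P(n-1<X\le n)$. Then $\lim_{n\to\infty}\mathrm{Var}[\widetilde H_n]=\infty$.
   Context: $X$ is a positive random variable with survival function $S(x)=P(X>x)$ satisfying $S(x)>0$ for all $x\ge0$. Let $X_1,\dots,X_n$ be independent copies of $X$, and let $\widehat S_n(x)=\frac1n\sum_{i=1}^n\mathbf 1\{X_i>x\}$ be the empirical survival function. Define $$\widetilde H_n=\sum_{j=1}^n\mathbf 1\{\widehat S_n(j-1)\ge j/n\}.$$ *)

theory Defs
  imports "HOL-Probability.Probability"
begin

definition surv :: "'a measure \<Rightarrow> ('a \<Rightarrow> real) \<Rightarrow> real \<Rightarrow> real" where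
  "surv M Y x = measure M {\<omega> \<in> space M. Y \<omega> > x}"

text \<open>Empirical survival function of the sample X_1,...,X_n, which are here
  the variables X 0, ..., X (n-1).\<close>
definition emp_surv :: "(nat \<Rightarrow> 'a \<Rightarrow> real) \<Rightarrow> nat \<Rightarrow> 'a \<Rightarrow> real \<Rightarrow> real" where
  "emp_surv X n \<omega> x = real (card {i \<in> {..<n}. X i \<omega> > x}) / real n"

definition Htilde :: "(nat \<Rightarrow> 'a \<Rightarrow> real) \<Rightarrow> nat \<Rightarrow> 'a \<Rightarrow> real" where
  "Htilde X n \<omega> = (\<Sum>j\<in>{1..n}. if emp_surv X n \<omega> (real j - 1) \<ge> real j / real n then 1 else 0)"

end

theory Submission
  imports Defs
begin


lemma (in prob_space) bnd_integrable:
  fixes f :: "'a \<Rightarrow> real"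
  assumes "f \<in> borel_measurable M" "\<And>x. x \<in> space M \<Longrightarrow> \<bar>f x\<bar> \<le> B"
  shows "integrable M f"
  using assms by (intro integrable_const_bound[where B=B]) auto

lemma (in prob_space) var_two_point:
  fixes H :: "'a \<Rightarrow> real"
  assumes Hm: "H \<in> borel_measurable M" and Hb: "\<And>x. x \<in> space M \<Longrightarrow> \<bar>H x\<bar> \<le> B"
    and ab: "a < b" and c1: "prob {x\<in>space M. H x \<le> a} \<ge> c"
    and c2: "prob {x\<in>space M. H x \<ge> b} \<ge> c"
  shows "variance H \<ge> c * (b - a)^2 / 4"
proof -
  define m where "m = expectation H"
  have iH: "integrable M H" by (rule bnd_integrable[OF Hm Hb])
  have mb: "\<bar>m\<bar> \<le> B"
  proof -
    have "\<bar>m\<bar> \<le> expectation (\<lambda>x. \<bar>H x\<bar>)" unfolding m_def by (rule integral_abs_bound)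
    also have "\<dots> \<le> expectation (\<lambda>x. B)"
      using Hb by (intro integral_mono) (auto intro!: bnd_integrable[OF _ Hb] iH)
    finally show ?thesis by (simp add: prob_space)
  qed
  have iV: "integrable M (\<lambda>x. (H x - m)^2)"
    apply (rule bnd_integrable[where B="(B+\<bar>m\<bar>)^2"])
    using Hm apply measurable
    subgoal for x
    proof -
      assume x: "x \<in> space M"
      have "\<bar>H x - m\<bar> \<le> B + \<bar>m\<bar>" using Hb[OF x] by linarith
      then have "\<bar>H x - m\<bar>^2 \<le> (B + \<bar>m\<bar>)^2" by (rule power_mono) simp
      then show ?thesis by simp
    qed
    done
  show ?thesis
  proof (cases "m \<le> (a+b)/2")
    case True
    let ?A = "{x\<in>space M. H x \<ge> b}"
    have As: "?A \<in> sets M" using Hm by measurable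
    have "c * (b - a)^2 / 4 \<le> ((b-a)/2)^2 * prob ?A"
      using mult_right_mono[OF c2, of "(b-a)^2"] by (simp add: power_divide mult.commute)
    also have "\<dots> = expectation (\<lambda>x. ((b-a)/2)^2 * indicator ?A x)"
      using As by simp
    also have "\<dots> \<le> variance H"
      unfolding m_def[symmetric]
    proof (rule integral_mono)
      show "integrable M (\<lambda>x. ((b - a) / 2)\<^sup>2 * indicator ?A x)" using As by (intro integrable_mult_right integrable_real_indicator) (auto simp: emeasure_eq_measure)
      show "integrable M (\<lambda>x. (H x - m)\<^sup>2)" by (rule iV)
      fix x assume "x \<in> space M"
      show "((b - a) / 2)\<^sup>2 * indicator ?A x \<le> (H x - m)\<^sup>2"
      proof (cases "x \<in> ?A")
        case True
        then have "(b-a)/2 \<le> H x - m" using \<open>m \<le> (a+b)/2\<close> by auto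
        then show ?thesis using True ab by (simp add: power_mono)
      qed simp
    qed
    finally show ?thesis .
  next
    case False
    let ?A = "{x\<in>space M. H x \<le> a}"
    have As: "?A \<in> sets M" using Hm by measurable
    have "c * (b - a)^2 / 4 \<le> ((b-a)/2)^2 * prob ?A"
      using mult_right_mono[OF c1, of "(b-a)^2"] by (simp add: power_divide mult.commute)
    also have "\<dots> = expectation (\<lambda>x. ((b-a)/2)^2 * indicator ?A x)"
      using As by simp
    also have "\<dots> \<le> variance H"
      unfolding m_def[symmetric]
    proof (rule integral_mono)
      show "integrable M (\<lambda>x. ((b - a) / 2)\<^sup>2 * indicator ?A x)" using As by (intro integrable_mult_right integrable_real_indicator) (auto simp: emeasure_eq_measure)
      show "integrable M (\<lambda>x. (H x - m)\<^sup>2)" by (rule iV)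
      fix x assume "x \<in> space M"
      show "((b - a) / 2)\<^sup>2 * indicator ?A x \<le> (H x - m)\<^sup>2"
      proof (cases "x \<in> ?A")
        case True
        then have "(b-a)/2 \<le> m - H x" using \<open>\<not> m \<le> (a+b)/2\<close> by auto
        then have "((b-a)/2)^2 \<le> (m - H x)^2" using ab by (simp add: power_mono)
        then show ?thesis using True by (simp add: power2_commute)
      qed simp
    qed
    finally show ?thesis .
  qed
qed


lemma (in prob_space) anticonc:
  fixes Y :: "'a \<Rightarrow> real"
  assumes Ym: "Y \<in> borel_measurable M" and Yb: "\<And>x. x \<in> space M \<Longrightarrow> \<bar>Y x\<bar> \<le> B"
    and E1: "expectation Y = 0" and E2: "expectation (\<lambda>x. (Y x)^2) = s^2" and s: "s > 0"
    and E4: "expectation (\<lambda>x. (Y x)^4) \<le> 4 * s^4"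
  shows "prob {x\<in>space M. Y x \<ge> s/32} \<ge> 1/256"
proof -
  have iY: "integrable M Y" by (rule bnd_integrable[OF Ym Yb])
  have iY2: "integrable M (\<lambda>x. (Y x)^2)"
    apply (rule bnd_integrable[where B="B^2"]) using Ym apply measurable
    subgoal for x using Yb[of x] power_mono[of "\<bar>Y x\<bar>" B 2] by (simp add: power_abs)
    done
  have iY4: "integrable M (\<lambda>x. (Y x)^4)"
    apply (rule bnd_integrable[where B="B^4"]) using Ym apply measurable
    subgoal for x using Yb[of x] power_mono[of "\<bar>Y x\<bar>" B 4] by (simp add: power_abs)
    done
  have iA: "integrable M (\<lambda>x. \<bar>Y x\<bar>)" using iY by simp
  have iP: "integrable M (\<lambda>x. max (Y x) 0)"
    apply (rule bnd_integrable[where B=B]) using Ym apply measurable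
    subgoal for x using Yb[of x] by auto
    done
  let ?A = "{x\<in>space M. Y x \<ge> s/32}"
  have As: "?A \<in> sets M" using Ym by measurable
  have iI: "integrable M (indicator ?A :: 'a \<Rightarrow> real)"
    using As by (intro integrable_real_indicator) (auto simp: emeasure_eq_measure)
  have pw1: "(Y x)^2 \<le> 4* s* abs (Y x) + (Y x)^4 / (16* s^2)" for x
  proof (cases "\<bar>Y x\<bar> \<le> 4* s")
    case True
    have "(Y x)^2 = \<bar>Y x\<bar> * \<bar>Y x\<bar>" by (simp add: power2_eq_square)
    also have "\<dots> \<le> 4* s* abs (Y x)" by (rule mult_right_mono[OF True abs_ge_zero])
    moreover have "0 \<le> (Y x)^4 / (16* s^2)" using s by simp
    ultimately show ?thesis by linarith
  next
    case False
    then have "(4* s)^2 \<le> (abs (Y x))^2" using s by (intro power_mono) auto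
    then have "16* s^2 \<le> (Y x)^2" by (simp add: power_mult_distrib)
    then have "(Y x)^2 * (16* s^2) \<le> (Y x)^2 * (Y x)^2" by (rule mult_left_mono) auto
    then have "(Y x)^2 \<le> (Y x)^4 / (16* s^2)" using s by (simp add: field_simps power4_eq_xxxx power2_eq_square)
    moreover have "0 \<le> 4* s* abs (Y x)" using s by simp
    ultimately show ?thesis by linarith
  qed
  have "s^2 \<le> expectation (\<lambda>x. 4* s* abs (Y x) + (Y x)^4 / (16* s^2))"
  proof -
    have "expectation (\<lambda>x. (Y x)^2) \<le> expectation (\<lambda>x. 4* s* abs (Y x) + (Y x)^4 / (16* s^2))"
      using pw1 by (intro integral_mono iY2) (auto intro!: iA iY4)
    then show ?thesis using E2 by simp
  qed
  also have "\<dots> = 4* s* expectation (\<lambda>x. \<bar>Y x\<bar>) + expectation (\<lambda>x. (Y x)^4) / (16* s^2)"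
    using iA iY4 by simp
  also have "\<dots> \<le> 4* s* expectation (\<lambda>x. \<bar>Y x\<bar>) + 4* s^4 / (16* s^2)"
    using divide_right_mono[OF E4, of "16* s^2"] s by simp
  also have "4* s^4 / (16* s^2) = s^2/4" using s by (simp add: field_simps power4_eq_xxxx power2_eq_square)
  finally have "s*(3* s) \<le> s*(16* expectation (\<lambda>x. \<bar>Y x\<bar>))"
    by (simp add: power2_eq_square algebra_simps)
  then have EA: "3* s/16 \<le> expectation (\<lambda>x. \<bar>Y x\<bar>)" using s
    by (simp add: mult_le_cancel_left_pos)
  have "expectation (\<lambda>x. \<bar>Y x\<bar>) = expectation (\<lambda>x. 2 * max (Y x) 0 - Y x)"
    by (intro Bochner_Integration.integral_cong) auto
  also have "\<dots> = 2 * expectation (\<lambda>x. max (Y x) 0)" using iP iY E1 by simp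
  finally have EP: "3* s/32 \<le> expectation (\<lambda>x. max (Y x) 0)" using EA by simp
  have pw2: "max (Y x) 0 \<le> s/32 + 8* s* indicator ?A x + (Y x)^2/(32* s)" if x: "x \<in> space M" for x
  proof (cases "Y x \<ge> s/32")
    case True
    have "0 \<le> (Y x - 16* s)^2" by simp
    then have "32* s* Y x \<le> (Y x)^2 + 256* s^2" by (simp add: power2_eq_square algebra_simps)
    then have "Y x \<le> (Y x)^2/(32* s) + 8* s" using s by (simp add: field_simps power2_eq_square)
    then show ?thesis using True x s by auto
  next
    case False
    have "0 \<le> (Y x)^2/(32* s)" using s by simp
    moreover have "max (Y x) 0 \<le> s/32" using s False by auto
    moreover have "0 \<le> 8* s* indicator ?A x" using s by simp
    ultimately show ?thesis by linarith
  qed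
  have "3* s/32 \<le> expectation (\<lambda>x. s/32 + 8* s* indicator ?A x + (Y x)^2/(32* s))"
    using EP integral_mono[OF iP _ pw2] iI iY2 by fastforce
  also have "\<dots> = s/32 + 8* s* prob ?A + s^2/(32* s)"
    using iI iY2 As E2 by (simp add: prob_space)
  finally have "3* s/32 \<le> s/32 + 8* s* prob ?A + s/32" using s by (simp add: power2_eq_square)
  then show ?thesis using s by (simp add: field_simps)
qed




lemma (in prob_space) pow_prod_integrable:
  fixes A B :: "'a \<Rightarrow> real"
  assumes Am: "A \<in> borel_measurable M" and Bm: "B \<in> borel_measurable M"
    and Ab: "\<And>x. x \<in> space M \<Longrightarrow> \<bar>A x\<bar> \<le> a" and Bb: "\<And>x. x \<in> space M \<Longrightarrow> \<bar>B x\<bar> \<le> b"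
  shows "integrable M (\<lambda>x. A x ^ i * B x ^ j)"
proof (rule bnd_integrable[where B="a^i * b^j"])
  show "(\<lambda>x. A x ^ i * B x ^ j) \<in> borel_measurable M" using Am Bm by measurable
  fix x assume x: "x \<in> space M"
  have "\<bar>A x ^ i * B x ^ j\<bar> = \<bar>A x\<bar> ^ i * \<bar>B x\<bar> ^ j" by (simp add: abs_mult power_abs)
  also have "\<dots> \<le> a^i * b^j"
    using Ab[OF x] Bb[OF x] by (intro mult_mono power_mono) auto
  finally show "\<bar>A x ^ i * B x ^ j\<bar> \<le> a^i * b^j" .
qed

lemma (in prob_space) indep_pow:
  fixes A B :: "'a \<Rightarrow> real"
  assumes ind: "indep_var borel A borel B"
    and Am: "A \<in> borel_measurable M" and Bm: "B \<in> borel_measurable M"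
    and Ab: "\<And>x. x \<in> space M \<Longrightarrow> \<bar>A x\<bar> \<le> a" and Bb: "\<And>x. x \<in> space M \<Longrightarrow> \<bar>B x\<bar> \<le> b"
  shows "expectation (\<lambda>x. A x ^ i * B x ^ j) = expectation (\<lambda>x. A x ^ i) * expectation (\<lambda>x. B x ^ j)"
proof -
  have ind': "indep_var borel (\<lambda>x. A x ^ i) borel (\<lambda>x. B x ^ j)"
    using indep_var_compose[unfolded comp_def, OF ind, of "\<lambda>x. x ^ i" borel "\<lambda>x. x ^ j" borel]
    by simp
  show ?thesis
    using pow_prod_integrable[OF Am Bm Ab Bb, of i 0] pow_prod_integrable[OF Am Bm Ab Bb, of 0 j]
    by (intro indep_var_lebesgue_integral[OF ind']) auto
qed

lemma four_exp: "(a+b::real)^4 = a^4 + 4 * (a^3 * b) + 6 * (a^2 * b^2) + 4 * (a * b^3) + b^4"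
  by (simp add: power4_eq_xxxx power3_eq_cube power2_eq_square algebra_simps)

lemma (in prob_space) sum_moments:
  fixes Z :: "nat \<Rightarrow> 'a \<Rightarrow> real"
  assumes ind: "indep_vars (\<lambda>_. borel) Z UNIV"
    and Zm: "\<And>i. Z i \<in> borel_measurable M" and Zb: "\<And>i x. x \<in> space M \<Longrightarrow> \<bar>Z i x\<bar> \<le> 1"
    and E1: "\<And>i. expectation (Z i) = 0" and E2: "\<And>i. expectation (\<lambda>x. (Z i x)^2) = v"
  shows "expectation (\<lambda>x. (\<Sum>i<m. Z i x)) = 0 \<and> expectation (\<lambda>x. (\<Sum>i<m. Z i x)^2) = m * v
    \<and> expectation (\<lambda>x. (\<Sum>i<m. Z i x)^4) \<le> m * v + 3 * (m * v)^2"
proof (induction m)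
  case 0
  then show ?case by simp
next
  case (Suc m)
  define T where "T = (\<lambda>x. \<Sum>i<m. Z i x)"
  have Tm: "T \<in> borel_measurable M" unfolding T_def using Zm by measurable
  have Tb: "\<bar>T x\<bar> \<le> real m" if "x \<in> space M" for x
  proof -
    have "\<bar>T x\<bar> \<le> (\<Sum>i<m. \<bar>Z i x\<bar>)" unfolding T_def by (rule sum_abs)
    also have "\<dots> \<le> (\<Sum>i<m. 1)" using Zb[OF that] by (intro sum_mono) auto
    finally show ?thesis by simp
  qed
  have IH1: "expectation T = 0" and IH2: "expectation (\<lambda>x. (T x)^2) = m * v"
    and IH4: "expectation (\<lambda>x. (T x)^4) \<le> m * v + 3 * (m * v)^2"
    using Suc.IH unfolding T_def by auto
  have indT: "indep_var borel (Z m) borel T"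
    unfolding T_def using ind by (intro indep_vars_sum) (auto intro: indep_vars_subset)
  note ip = indep_pow[OF indT Zm[of m] Tm Zb[of _ m] Tb]
  note ii = pow_prod_integrable[OF Zm[of m] Tm Zb[of _ m] Tb]
  have v0: "0 \<le> v" using E2[of 0] by (metis integral_nonneg_AE zero_le_power2 AE_I2)
  have E4: "expectation (\<lambda>x. (Z m x)^4) \<le> v"
  proof -
    have "expectation (\<lambda>x. (Z m x)^4) \<le> expectation (\<lambda>x. (Z m x)^2)"
    proof (rule integral_mono)
      show "integrable M (\<lambda>x. (Z m x)^4)" using ii[of 4 0] by simp
      show "integrable M (\<lambda>x. (Z m x)^2)" using ii[of 2 0] by simp
      fix x assume x: "x \<in> space M"
      have "\<bar>Z m x\<bar>^2 * \<bar>Z m x\<bar>^2 \<le> 1 * \<bar>Z m x\<bar>^2"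
        using Zb[OF x] by (intro mult_right_mono) (auto simp: abs_square_le_1)
      then show "(Z m x)^4 \<le> (Z m x)^2" by (simp add: power4_eq_xxxx power2_eq_square)
    qed
    then show ?thesis using E2 by simp
  qed
  have s1: "(\<lambda>x. \<Sum>i<Suc m. Z i x) = (\<lambda>x. T x + Z m x)" unfolding T_def by simp
  have "expectation (\<lambda>x. T x + Z m x) = 0"
    using ii[of 0 1] ii[of 1 0] IH1 E1 by simp
  moreover have "expectation (\<lambda>x. (T x + Z m x)^2) = Suc m * v"
  proof -
    have "expectation (\<lambda>x. (T x + Z m x)^2) = expectation (\<lambda>x. Z m x^0 * T x^2 + 2 * (Z m x^1 * T x^1) + Z m x^2 * T x^0)"
      by (rule Bochner_Integration.integral_cong) (auto simp: power2_eq_square algebra_simps)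
    also have "\<dots> = expectation (\<lambda>x. Z m x^0 * T x^2) + 2 * expectation (\<lambda>x. Z m x^1 * T x^1) + expectation (\<lambda>x. Z m x^2 * T x^0)"
      using ii[of 0 2] ii[of 1 1] ii[of 2 0] by simp
    also have "\<dots> = m * v + 2 * (expectation (Z m) * expectation T) + v"
      using ip[of 1 1] IH2 E2[of m] by simp
    finally show ?thesis using IH1 by (simp add: algebra_simps)
  qed
  moreover have "expectation (\<lambda>x. (T x + Z m x)^4) \<le> Suc m * v + 3 * (Suc m * v)^2"
  proof -
    have "expectation (\<lambda>x. (T x + Z m x)^4) = expectation (\<lambda>x. Z m x^0 * T x^4 + 4 * (Z m x^1 * T x^3) + 6 * (Z m x^2 * T x^2) + 4 * (Z m x^3 * T x^1) + Z m x^4 * T x^0)"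
      by (rule Bochner_Integration.integral_cong) (auto simp: four_exp)
    also have "\<dots> = expectation (\<lambda>x. Z m x^0 * T x^4) + 4 * expectation (\<lambda>x. Z m x^1 * T x^3) + 6 * expectation (\<lambda>x. Z m x^2 * T x^2) + 4 * expectation (\<lambda>x. Z m x^3 * T x^1) + expectation (\<lambda>x. Z m x^4 * T x^0)"
      using ii[of 0 4] ii[of 1 3] ii[of 2 2] ii[of 3 1] ii[of 4 0] by simp
    also have "\<dots> = expectation (\<lambda>x. T x^4) + 4 * (expectation (Z m) * expectation (\<lambda>x. T x^3)) + 6 * (m * v * v) + 4 * (expectation (\<lambda>x. Z m x^3) * expectation T) + expectation (\<lambda>x. Z m x^4)"
      using ip[of 1 3] ip[of 2 2] ip[of 3 1] IH2 E2[of m] by simp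
    also have "\<dots> \<le> m * v + 3 * (m * v)^2 + 6 * (m * v * v) + v"
      using IH4 E4 IH1 E1[of m] by simp
    also have "\<dots> \<le> Suc m * v + 3 * (Suc m * v)^2"
      using v0 by (simp add: power2_eq_square algebra_simps)
    finally show ?thesis .
  qed
  ultimately show ?case unfolding s1 by (simp add: T_def)
qed




lemma card_as_sum: "real (card {i\<in>{..<(n::nat)}. t < X i w}) = (\<Sum>i<n. if t < X i w then 1 else (0::real))"
  unfolding real_of_card by (rule sum.inter_filter) simp

lemma surv_ident:
  assumes "prob_space M" and rv: "\<And>i. X i \<in> borel_measurable M"
    and ident: "\<And>i. distr M borel (X i) = distr M borel (X 0)"
  shows "surv M (X i) t = surv M (X 0) t"
proof -
  have "surv M (X j) t = measure (distr M borel (X j)) {t<..}" for j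
    unfolding surv_def using rv[of j] by (subst measure_distr) (auto intro!: arg_cong[where f="measure M"])
  then show ?thesis using ident[of i] by simp
qed

lemma count_tails:
  fixes M :: "'a measure" and X :: "nat \<Rightarrow> 'a \<Rightarrow> real"
  assumes PS: "prob_space M"
    and rv: "\<And>i. X i \<in> borel_measurable M"
    and indep: "prob_space.indep_vars M (\<lambda>_. borel) X UNIV"
    and ident: "\<And>i. distr M borel (X i) = distr M borel (X 0)"
    and p: "p = surv M (X 0) t" and v: "real n * p * (1-p) \<ge> 1"
  shows "prob_space.prob M {w\<in>space M. real (card {i\<in>{..<n}. t < X i w}) \<ge> n * p + sqrt (n * p * (1-p))/32} \<ge> 1/256"
    and "prob_space.prob M {w\<in>space M. real (card {i\<in>{..<n}. t < X i w}) \<le> n * p - sqrt (n * p * (1-p))/32} \<ge> 1/256"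
proof -
  interpret prob_space M by (rule PS)
  define Z where "Z = (\<lambda>i w. (if t < X i w then 1 else 0) - p)"
  have p01: "0 \<le> p" "p \<le> 1" unfolding p surv_def by auto
  have Zm: "Z i \<in> borel_measurable M" for i unfolding Z_def using rv[of i] by measurable
  have Zb: "\<bar>Z i w\<bar> \<le> 1" for i w unfolding Z_def using p01 by auto
  have indZ: "indep_vars (\<lambda>_. borel) Z UNIV"
  proof -
    have mf: "(\<lambda>x::real. (if t < x then 1 else 0) - p) \<in> borel_measurable borel" by measurable
    have "indep_vars (\<lambda>_. borel) (\<lambda>i w. (\<lambda>x::real. (if t < x then 1 else 0) - p) (X i w)) UNIV"
      by (rule indep_vars_compose2[OF indep]) (rule mf)
    then show ?thesis unfolding Z_def by simp
  qed
  have ZA: "Z i w = indicator {w\<in>space M. t < X i w} w - p" if "w \<in> space M" for i w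
    unfolding Z_def using that by (auto simp: indicator_def)
  have As: "{w\<in>space M. t < X i w} \<in> sets M" for i using rv[of i] by measurable
  have PA: "prob {w\<in>space M. t < X i w} = p" for i
    using surv_ident[of M X, OF PS rv ident, of i t] unfolding p surv_def by simp
  have iI: "integrable M (indicator {w\<in>space M. t < X i w} :: 'a \<Rightarrow> real)" for i
    using As by (intro integrable_real_indicator) (auto simp: emeasure_eq_measure)
  have E1: "expectation (Z i) = 0" for i
  proof -
    have "expectation (Z i) = expectation (\<lambda>w. indicator {w\<in>space M. t < X i w} w - p)"
      by (rule Bochner_Integration.integral_cong) (auto simp: ZA)
    also have "\<dots> = 0" using iI[of i] As[of i] PA[of i] by (simp add: prob_space)
    finally show ?thesis .
  qed
  have E2: "expectation (\<lambda>w. (Z i w)^2) = p * (1-p)" for i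
  proof -
    have "expectation (\<lambda>w. (Z i w)^2) = expectation (\<lambda>w. (1 - 2 * p) * indicator {w\<in>space M. t < X i w} w + p^2)"
      by (rule Bochner_Integration.integral_cong) (auto simp: ZA indicator_def power2_eq_square algebra_simps)
    also have "\<dots> = p * (1-p)" using iI[of i] As[of i] PA[of i] by (simp add: prob_space algebra_simps power2_eq_square)
    finally show ?thesis .
  qed
  note mom = sum_moments[OF indZ Zm Zb E1 E2, of n]
  define Y where "Y = (\<lambda>w. \<Sum>i<n. Z i w)"
  define s where "s = sqrt (n * p * (1-p))"
  have s2: "s^2 = n * p * (1-p)" unfolding s_def using v by simp
  have s0: "s > 0" unfolding s_def using v by simp
  have Ycard: "Y w = real (card {i\<in>{..<n}. t < X i w}) - n * p" for w
    unfolding Y_def Z_def card_as_sum by (simp add: sum_subtractf)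
  have Ym: "Y \<in> borel_measurable M" unfolding Y_def using Zm by measurable
  have Yb: "\<bar>Y w\<bar> \<le> n" for w
  proof -
    have "\<bar>Y w\<bar> \<le> (\<Sum>i<n. \<bar>Z i w\<bar>)" unfolding Y_def by (rule sum_abs)
    also have "\<dots> \<le> (\<Sum>i<n. 1)" using Zb by (intro sum_mono) auto
    finally show ?thesis by simp
  qed
  have EY1: "expectation Y = 0" using mom unfolding Y_def by simp
  have EY2: "expectation (\<lambda>w. (Y w)^2) = s^2" using mom s2 unfolding Y_def by simp
  have EY4: "expectation (\<lambda>w. (Y w)^4) \<le> 4 * s^4"
  proof -
    have "expectation (\<lambda>w. (Y w)^4) \<le> s^2 + 3 * (s^2)^2" using mom s2 unfolding Y_def by (simp add: mult.assoc)
    also have "\<dots> \<le> 4 * s^4"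
    proof -
      have q1: "1 \<le> s^2" using v s2 by simp
      have "s^2 * 1 \<le> s^2 * s^2" by (rule mult_left_mono[OF q1]) simp
      moreover have "s^4 = s^2 * s^2" by (simp add: power4_eq_xxxx power2_eq_square)
      ultimately show ?thesis by (simp add: power2_eq_square)
    qed
    finally show ?thesis .
  qed
  have "prob {w\<in>space M. Y w \<ge> s/32} \<ge> 1/256"
    by (rule anticonc[OF Ym Yb EY1 EY2 s0 EY4])
  moreover have "{w\<in>space M. Y w \<ge> s/32} = {w\<in>space M. real (card {i\<in>{..<n}. t < X i w}) \<ge> n * p + sqrt (n * p * (1-p))/32}"
    unfolding Ycard s_def by auto
  ultimately show "prob {w\<in>space M. real (card {i\<in>{..<n}. t < X i w}) \<ge> n * p + sqrt (n * p * (1-p))/32} \<ge> 1/256"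
    by simp
  have "prob {w\<in>space M. - Y w \<ge> s/32} \<ge> 1/256"
    by (rule anticonc[where Y="\<lambda>w. - Y w"]) (use Ym Yb EY1 EY2 s0 EY4 in auto)
  moreover have "{w\<in>space M. - Y w \<ge> s/32} = {w\<in>space M. real (card {i\<in>{..<n}. t < X i w}) \<le> n * p - sqrt (n * p * (1-p))/32}"
    unfolding Ycard s_def by auto
  ultimately show "prob {w\<in>space M. real (card {i\<in>{..<n}. t < X i w}) \<le> n * p - sqrt (n * p * (1-p))/32} \<ge> 1/256"
    by simp
qed




lemma emp_surv_iff:
  assumes "n > 0"
  shows "emp_surv X n w x \<ge> real j / real n \<longleftrightarrow> real (card {i\<in>{..<n}. x < X i w}) \<ge> real j"
  using assms unfolding emp_surv_def by (simp add: divide_le_cancel)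

lemma card_anti:
  fixes x y :: real
  assumes "x \<le> y"
  shows "card {i\<in>{..<(n::nat)}. y < X i w} \<le> card {i\<in>{..<n}. x < X i w}"
  using assms by (intro card_mono) (auto intro: le_less_trans)

lemma Htilde_ge:
  assumes b: "1 \<le> b" "b \<le> n" and c: "real (card {i\<in>{..<n}. real b - 1 < X i w}) \<ge> real b"
  shows "Htilde X n w \<ge> real b"
proof -
  have n0: "n > 0" using b by simp
  have "real b = (\<Sum>j\<in>{1..b}. 1::real)" by simp
  also have "\<dots> = (\<Sum>j\<in>{1..b}. if emp_surv X n w (real j - 1) \<ge> real j / real n then 1 else 0)"
  proof (rule sum.cong)
    fix j assume j: "j \<in> {1..b}"
    have "real j \<le> real b" using j by simp
    also have "\<dots> \<le> real (card {i\<in>{..<n}. real b - 1 < X i w})" by (rule c)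
    also have "\<dots> \<le> real (card {i\<in>{..<n}. real j - 1 < X i w})"
      using j by (intro of_nat_mono card_anti) auto
    finally show "1 = (if emp_surv X n w (real j - 1) \<ge> real j / real n then 1 else (0::real))"
      using emp_surv_iff[OF n0, of j X w "real j - 1"] by simp
  qed simp
  also have "\<dots> \<le> Htilde X n w"
    unfolding Htilde_def using b by (intro sum_mono2) auto
  finally show ?thesis .
qed

lemma Htilde_le:
  assumes n0: "n > 0" and c: "real (card {i\<in>{..<n}. real a < X i w}) \<le> real a"
  shows "Htilde X n w \<le> real a"
proof -
  have "Htilde X n w \<le> (\<Sum>j\<in>{1..n}. if j \<le> a then 1 else 0::real)"
    unfolding Htilde_def
  proof (rule sum_mono)
    fix j assume j: "j \<in> {1..n}"
    show "(if emp_surv X n w (real j - 1) \<ge> real j / real n then 1 else 0) \<le> (if j \<le> a then 1 else 0::real)"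
    proof (cases "j \<le> a")
      case False
      have "real (card {i\<in>{..<n}. real j - 1 < X i w}) \<le> real (card {i\<in>{..<n}. real a < X i w})"
        using False by (intro of_nat_mono card_anti) auto
      also have "\<dots> \<le> real a" by (rule c)
      also have "\<dots> < real j" using False by simp
      finally show ?thesis using emp_surv_iff[OF n0, of j X w "real j - 1"] False by auto
    qed auto
  qed
  also have "\<dots> = real (card {j\<in>{1..n}. j \<le> a})"
    unfolding real_of_card by (rule sum.inter_filter[symmetric]) simp
  also have "\<dots> \<le> real (card {1..a})"
    by (intro of_nat_mono card_mono) auto
  finally show ?thesis by simp
qed

lemma Htilde_bnd: "\<bar>Htilde X n w\<bar> \<le> real n"
proof -
  have "0 \<le> Htilde X n w" unfolding Htilde_def by (intro sum_nonneg) auto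
  moreover have "Htilde X n w \<le> (\<Sum>j\<in>{1..n}. 1)" unfolding Htilde_def by (intro sum_mono) auto
  ultimately show ?thesis by simp
qed

lemma Htilde_meas:
  assumes rv: "\<And>i. X i \<in> borel_measurable M"
  shows "Htilde X n \<in> borel_measurable M"
proof -
  have "Htilde X n = (\<lambda>w. \<Sum>j\<in>{1..n}. if (\<Sum>i<n. if real j - 1 < X i w then 1 else (0::real)) / real n \<ge> real j / real n then 1 else 0)"
    unfolding Htilde_def emp_surv_def card_as_sum by simp
  also have "\<dots> \<in> borel_measurable M" using rv by measurable
  finally show ?thesis .
qed


theorem theorem4p2:
  fixes M :: "'a measure" and X :: "nat \<Rightarrow> 'a \<Rightarrow> real"
  assumes "prob_space M"
    and rv: "\<And>i. X i \<in> borel_measurable M"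
    and indep: "prob_space.indep_vars M (\<lambda>_. borel) X UNIV"
    and ident: "\<And>i. distr M borel (X i) = distr M borel (X 0)"
    and pos: "AE \<omega> in M. X 0 \<omega> > 0"
    and S_pos: "\<And>x. x \<ge> 0 \<Longrightarrow> surv M (X 0) x > 0"
    and lim: "(\<lambda>n. sqrt (real n) * (surv M (X 0) (real n - 1) - surv M (X 0) (real n))
                     / surv M (X 0) (real n)) \<longlonglongrightarrow> 0"
  shows "filterlim (\<lambda>n. prob_space.variance M (Htilde X n)) at_top sequentially"
proof -
  note PS = \<open>prob_space M\<close>
  interpret prob_space M by (rule PS)
  define S where "S = surv M (X 0)"
  have Sev: "{w\<in>space M. x < X 0 w} \<in> sets M" for x using rv[of 0] by measurable
  have Smono: "S y \<le> S x" if "x \<le> y" for x y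
    unfolding S_def surv_def using that Sev by (intro finite_measure_mono) auto
  have S01: "0 \<le> S x" "S x \<le> 1" for x unfolding S_def surv_def by auto
  have Slim: "(\<lambda>k. S (real k)) \<longlonglongrightarrow> 0"
  proof -
    have "(\<lambda>k. measure M {w\<in>space M. real k < X 0 w}) \<longlonglongrightarrow> measure M (\<Inter>k. {w\<in>space M. real k < X 0 w})"
      using Sev by (intro finite_Lim_measure_decseq) (auto simp: decseq_def)
    moreover have "(\<Inter>k. {w\<in>space M. real k < X 0 w}) = {}"
    proof (safe)
      fix w assume "w \<in> (\<Inter>k. {w\<in>space M. real k < X 0 w})"
      moreover obtain k :: nat where "X 0 w < real k" using reals_Archimedean2 by blast
      ultimately show "w \<in> {}" by (metis (mono_tags, lifting) INT_E UNIV_I less_asym mem_Collect_eq)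
    qed
    ultimately show ?thesis unfolding S_def surv_def by simp
  qed
  obtain x0 :: nat where x0: "S (real x0) \<le> 1/2"
  proof -
    have "eventually (\<lambda>k. S (real k) < 1/2) sequentially"
      using Slim by (intro order_tendstoD) auto
    then obtain k where "S (real k) < 1/2" using eventually_sequentially by auto
    then show ?thesis using that[of k] by simp
  qed
  have Shalf: "S x \<le> 1/2" if "real x0 \<le> x" for x using Smono[OF that] x0 by simp
  show ?thesis
    unfolding filterlim_at_top
  proof
    fix Z :: real
    define L :: nat where "L = nat \<lceil>1024 * \<bar>Z\<bar>\<rceil> + 1"
    have L1: "L \<ge> 1" unfolding L_def by simp
    have LZ: "Z \<le> (real L)^2 / 1024"
    proof -
      have "1024 * \<bar>Z\<bar> \<le> real L" unfolding L_def by linarith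
      also have "\<dots> \<le> (real L)^2" using L1 by (simp add: power2_eq_square)
      finally show ?thesis by simp
    qed
    define \<eta> :: real where "\<eta> = 1 / (10000 * L)"
    have \<eta>0: "\<eta> > 0" unfolding \<eta>_def using L1 by simp
    obtain M0 :: nat where M0: "\<And>m. m \<ge> M0 \<Longrightarrow> sqrt (real m) * (S (real m - 1) - S (real m)) \<le> \<eta> * S (real m)"
    proof -
      have "eventually (\<lambda>m. \<bar>sqrt (real m) * (S (real m - 1) - S (real m)) / S (real m)\<bar> < \<eta>) sequentially"
        using lim[unfolded S_def[symmetric]] \<eta>0 by (simp add: tendsto_iff dist_real_def del: real_sqrt_abs)
      then obtain N where N: "\<And>m. m \<ge> N \<Longrightarrow> \<bar>sqrt (real m) * (S (real m - 1) - S (real m)) / S (real m)\<bar> < \<eta>"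
        unfolding eventually_sequentially by blast
      have "sqrt (real m) * (S (real m - 1) - S (real m)) \<le> \<eta> * S (real m)" if "m \<ge> N" for m
      proof -
        have Sp: "S (real m) > 0" unfolding S_def by (rule S_pos) simp
        have "sqrt (real m) * (S (real m - 1) - S (real m)) / S (real m) < \<eta>" using N[OF that] by linarith
        then show ?thesis using Sp by (simp add: divide_less_eq)
      qed
      then show ?thesis using that by blast
    qed
    define B0 :: nat where "B0 = 1000000 * (L+1)^2 + 2 * L + x0 + M0 + 2"
    have SB0: "S (real B0 - 1) > 0" unfolding S_def by (rule S_pos) (simp add: B0_def)
    have ev: "eventually (\<lambda>n. B0 \<le> n \<and> real B0 \<le> real n * S (real B0 - 1)) sequentially"
    proof -
      have "eventually (\<lambda>n. max B0 (nat \<lceil>real B0 / S (real B0 - 1)\<rceil>) \<le> n) sequentially"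
        by (rule eventually_ge_at_top)
      then show ?thesis
      proof (rule eventually_mono)
        fix n assume "max B0 (nat \<lceil>real B0 / S (real B0 - 1)\<rceil>) \<le> n"
        then have n1: "B0 \<le> n" and n2: "real B0 / S (real B0 - 1) \<le> real n" by linarith+
        from n2 SB0 have "real B0 \<le> real n * S (real B0 - 1)" by (simp add: divide_le_eq)
        with n1 show "B0 \<le> n \<and> real B0 \<le> real n * S (real B0 - 1)" by simp
      qed
    qed
    show "eventually (\<lambda>n. Z \<le> variance (Htilde X n)) sequentially"
      using ev
    proof (rule eventually_mono)
      fix n assume "B0 \<le> n \<and> real B0 \<le> real n * S (real B0 - 1)"
      then have nB0: "B0 \<le> n" and nSB0: "real B0 \<le> real n * S (real B0 - 1)" by auto
      define K where "K = {k\<in>{1..n}. real k \<le> real n * S (real k - 1)}"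
      have finK: "finite K" unfolding K_def by simp
      have B0K: "B0 \<in> K" unfolding K_def using nB0 nSB0 by (simp add: B0_def)
      define b where "b = Max K"
      have bK: "b \<in> K" unfolding b_def using finK B0K by (intro Max_in) auto
      have bB0: "B0 \<le> b" unfolding b_def using finK B0K by simp
      have b1: "1 \<le> b" and bn: "b \<le> n" and hb1: "real b \<le> real n * S (real b - 1)"
        using bK unfolding K_def by auto
      have hb2: "real n * S (real b) < real b + 1"
      proof (cases "b < n")
        case True
        have "Suc b \<notin> K"
        proof
          assume "Suc b \<in> K"
          then have "Suc b \<le> b" unfolding b_def using finK by simp
          then show False by simp
        qed
        then show ?thesis using True unfolding K_def by auto
      next
        case False
        then have "b = n" using bn by simp
        have "real n * S (real b) \<le> real n * 1" using S01(2)[of "real b"] by (intro mult_left_mono) auto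
        then show ?thesis using \<open>b = n\<close> by simp
      qed
      have n0: "n > 0" using b1 bn by simp
      define a where "a = b - L"
      have bL: "2 * L + x0 + M0 + 2 \<le> b" using bB0 unfolding B0_def by simp
      have ra: "real a = real b - real L" unfolding a_def using bL by simp
      have aL: "L \<le> a" and ab: "a < b" and aM0: "M0 \<le> a" unfolding a_def using bL L1 by auto
      have ax0: "real x0 \<le> real a" and bx0: "real x0 \<le> real b - 1" unfolding a_def using bL by auto
      define r where "r = sqrt (real b)"
      have rr: "r * r = real b" unfolding r_def by simp
      have bbig: "(1000 * (real L + 1))^2 \<le> real b"
      proof -
        have "(1000 * (real L + 1))^2 = real (1000000 * (L+1)^2)" by (simp add: power2_eq_square algebra_simps)
        also have "\<dots> \<le> real b" using bB0 unfolding B0_def by linarith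
        finally show ?thesis .
      qed
      have rL: "1000 * (real L + 1) \<le> r" unfolding r_def by (rule real_le_rsqrt[OF bbig])
      have r1: "1 \<le> r" using rL by simp
      have Sa0: "0 \<le> S (real a)" by (rule S01)
      have psi: "S (real m - 1) - S (real m) \<le> 2 * \<eta> * S (real a) / r" if m: "a < m" "m \<le> b" for m
      proof -
        have ps0: "0 \<le> S (real m - 1) - S (real m)" using Smono[of "real m - 1" "real m"] by simp
        have "real b \<le> 4 * real m" using m bL ra by linarith
        then have "(r/2)^2 \<le> real m" using rr by (simp add: power2_eq_square)
        then have sm: "r/2 \<le> sqrt (real m)" by (rule real_le_rsqrt)
        have "(r/2) * (S (real m - 1) - S (real m)) \<le> sqrt (real m) * (S (real m - 1) - S (real m))"
          using sm ps0 by (rule mult_right_mono)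
        also have "\<dots> \<le> \<eta> * S (real m)" using M0[of m] m aM0 by simp
        also have "\<dots> \<le> \<eta> * S (real a)" using Smono[of "real a" "real m"] m \<eta>0 by simp
        finally show ?thesis using r1 by (simp add: field_simps)
      qed
      have tel: "j \<le> L \<Longrightarrow> S (real b - real j) - S (real b) \<le> real j * (2 * \<eta> * S (real a) / r)" for j
      proof (induction j)
        case 0 then show ?case by simp
      next
        case (Suc j)
        have "S (real b - real (Suc j)) - S (real b) = (S (real (b - j) - 1) - S (real (b - j))) + (S (real b - real j) - S (real b))"
          using Suc.prems bL by (simp add: of_nat_diff algebra_simps)
        also have "\<dots> \<le> 2 * \<eta> * S (real a) / r + real j * (2 * \<eta> * S (real a) / r)"
        proof (rule add_mono)
          have m1: "a < b - j" "b - j \<le> b" using Suc.prems bL unfolding a_def by auto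
          show "S (real (b - j) - 1) - S (real (b - j)) \<le> 2 * \<eta> * S (real a) / r" by (rule psi[OF m1])
          show "S (real b - real j) - S (real b) \<le> real j * (2 * \<eta> * S (real a) / r)" using Suc.IH Suc.prems by simp
        qed
        finally show ?case by (simp add: algebra_simps add_divide_distrib)
      qed
      have D1: "S (real a) - S (real b) \<le> S (real a) / (5000 * r)"
      proof -
        have "S (real a) - S (real b) \<le> real L * (2 * \<eta> * S (real a) / r)" using tel[of L] ra by simp
        also have "\<dots> = S (real a) / (5000 * r)" unfolding \<eta>_def using L1 r1 by (simp add: field_simps)
        finally show ?thesis .
      qed
      have Sa2: "S (real a) \<le> 2 * S (real b)"
      proof -
        have "S (real a) / (5000 * r) \<le> S (real a) / 2" using Sa0 r1 by (intro divide_left_mono) auto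
        then show ?thesis using D1 by linarith
      qed
      have D2: "S (real a) - S (real b) \<le> S (real b) / (2500 * r)"
      proof -
        have "S (real a) / (5000 * r) \<le> (2 * S (real b)) / (5000 * r)" using Sa2 r1 by (intro divide_right_mono) auto
        then show ?thesis using D1 by simp
      qed
      have nD: "real n * (S (real a) - S (real b)) \<le> r / 1250"
      proof -
        have "real n * (S (real a) - S (real b)) \<le> real n * (S (real b) / (2500 * r))"
          using D2 by (intro mult_left_mono) auto
        also have "\<dots> = (real n * S (real b)) / (2500 * r)" by simp
        also have "\<dots> \<le> (2 * real b) / (2500 * r)" using hb2 b1 r1 by (intro divide_right_mono) auto
        also have "\<dots> = r / 1250" using rr r1 by (simp add: field_simps)
        finally show ?thesis .
      qed
      have Sab: "S (real b - 1) \<le> S (real a)" using ra L1 by (intro Smono) simp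
      have key: "real n * S (real a) - real a \<le> r / 64"
      proof -
        have "real n * S (real a) = real n * S (real b) + real n * (S (real a) - S (real b))" by (simp add: algebra_simps)
        then have "real n * S (real a) - real a < real L + 1 + r / 1250" using hb2 nD ra by linarith
        moreover have "real L + 1 \<le> r / 1000" using rL by simp
        ultimately show ?thesis using r1 by linarith
      qed
      define pb where "pb = S (real b - 1)"
      have pb2: "pb \<le> 1/2" unfolding pb_def by (rule Shalf[OF bx0])
      have vb: "real n * pb * (1 - pb) \<ge> 1"
      proof -
        have "real n * pb * (1/2) \<le> real n * pb * (1 - pb)" using pb2 S01[of "real b - 1"] unfolding pb_def
          by (intro mult_left_mono) auto
        moreover have "real n * pb \<ge> 2"
        proof -
          have "real b \<ge> 2" using bL by simp
          then show ?thesis using hb1 by (simp add: pb_def)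
        qed
        ultimately show ?thesis by linarith
      qed
      have hb1': "real b \<le> real n * pb" using hb1 by (simp add: pb_def)
      have Hm: "Htilde X n \<in> borel_measurable M" by (rule Htilde_meas[OF rv])
      have up: "prob {w\<in>space M. Htilde X n w \<ge> real b} \<ge> 1/256"
      proof -
        have "1/256 \<le> prob {w\<in>space M. real (card {i\<in>{..<n}. real b - 1 < X i w}) \<ge> n * pb + sqrt (n * pb * (1-pb))/32}"
          by (rule count_tails(1)[OF PS rv indep ident _ vb]) (simp add: pb_def S_def)
        also have "\<dots> \<le> prob {w\<in>space M. Htilde X n w \<ge> real b}"
        proof (rule finite_measure_mono)
          show "{w\<in>space M. Htilde X n w \<ge> real b} \<in> sets M" using Hm by measurable
          show "{w\<in>space M. real (card {i\<in>{..<n}. real b - 1 < X i w}) \<ge> n * pb + sqrt (n * pb * (1-pb))/32} \<subseteq> {w\<in>space M. Htilde X n w \<ge> real b}"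
          proof safe
            fix w assume w: "w \<in> space M" and c: "real n * pb + sqrt (real n * pb * (1 - pb)) / 32 \<le> real (card {i\<in>{..<n}. real b - 1 < X i w})"
            have "real b \<le> real (card {i\<in>{..<n}. real b - 1 < X i w})"
            proof -
              have "0 \<le> sqrt (real n * pb * (1 - pb)) / 32" using vb by simp
              then show ?thesis using c hb1' by linarith
            qed
            then show "real b \<le> Htilde X n w" by (rule Htilde_ge[OF b1 bn])
          qed
        qed
        finally show ?thesis .
      qed
      define pa where "pa = S (real a)"
      have pa2: "pa \<le> 1/2" unfolding pa_def by (rule Shalf[OF ax0])
      have va: "real n * pa * (1 - pa) \<ge> real b / 2"
      proof -
        have "real n * pa * (1/2) \<le> real n * pa * (1 - pa)" using pa2 S01[of "real a"] unfolding pa_def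
          by (intro mult_left_mono) auto
        moreover have "real n * pa \<ge> real b"
        proof -
          have "real n * S (real b - 1) \<le> real n * S (real a)" using Sab by (intro mult_left_mono) auto
          then show ?thesis using hb1 by (simp add: pa_def)
        qed
        ultimately show ?thesis by linarith
      qed
      have va1: "real n * pa * (1 - pa) \<ge> 1"
      proof -
        have "real b \<ge> 2" using bL by simp
        then show ?thesis using va by linarith
      qed
      have sva: "r / 2 \<le> sqrt (real n * pa * (1 - pa))"
        by (rule real_le_rsqrt) (use va rr in \<open>simp add: power2_eq_square\<close>)
      have down: "prob {w\<in>space M. Htilde X n w \<le> real a} \<ge> 1/256"
      proof -
        have "1/256 \<le> prob {w\<in>space M. real (card {i\<in>{..<n}. real a < X i w}) \<le> n * pa - sqrt (n * pa * (1-pa))/32}"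
          by (rule count_tails(2)[OF PS rv indep ident _ va1]) (simp add: pa_def S_def)
        also have "\<dots> \<le> prob {w\<in>space M. Htilde X n w \<le> real a}"
        proof (rule finite_measure_mono)
          show "{w\<in>space M. Htilde X n w \<le> real a} \<in> sets M" using Hm by measurable
          show "{w\<in>space M. real (card {i\<in>{..<n}. real a < X i w}) \<le> n * pa - sqrt (n * pa * (1-pa))/32} \<subseteq> {w\<in>space M. Htilde X n w \<le> real a}"
          proof safe
            fix w assume w: "w \<in> space M" and c: "real (card {i\<in>{..<n}. real a < X i w}) \<le> real n * pa - sqrt (real n * pa * (1 - pa)) / 32"
            have "real (card {i\<in>{..<n}. real a < X i w}) \<le> real a"
            proof -
              have "real n * pa - real a \<le> r / 64" using key by (simp add: pa_def)
              then show ?thesis using c sva by linarith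
            qed
            then show "Htilde X n w \<le> real a" by (rule Htilde_le[OF n0])
          qed
        qed
        finally show ?thesis .
      qed
      have "(1/256) * (real b - real a)^2 / 4 \<le> variance (Htilde X n)"
        by (rule var_two_point[OF Hm _ _ down up]) (use Htilde_bnd ab in auto)
      moreover have "real b - real a = real L" using ra by simp
      ultimately show "Z \<le> variance (Htilde X n)" using LZ by simp
    qed
  qed
qed


end
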